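(* For all formulas $\alpha,\beta$, the following hold in ${\bf Km}$: (i) $\Box \alpha, \Diamond \alpha, \Diamond \neg \beta \vdash_{\bf Km} \Diamond \neg (\alpha \to \beta)$; (ii) $\Diamond \alpha, \Box \neg \beta, \Diamond \neg \beta \vdash_{\bf Km} \Diamond \neg (\alpha \to \beta)$; (iii) $\Box \alpha, \Diamond \alpha, \Box \neg \beta \vdash_{\bf Km} \Box \neg(\alpha \to \beta)$; (iv) $\Diamond \alpha, \Diamond \beta \vdash_{\bf Km} \Diamond(\alpha \to \beta)$; (v) $\Diamond \neg \alpha, \Diamond \beta \vdash_{\bf Km} \Diamond(\alpha \to \beta)$; (vi) $\Diamond \neg \alpha, \Diamond \neg \beta \vdash_{\bf Km} \Diamond(\alpha \to \beta)$.
   Context: Formulas are built from a denumerable set of propositional variables by the unary connectives $\neg$, $\Box$ and the binary connective $\to$; $For$ is the set of all formulas. Abbreviations: $\Diamond\alpha:=\neg\Box\neg\alpha$, $\alpha\vee\beta:=\neg\alpha\to\beta$, $\alpha\wedge\beta:=\neg(\alpha\to\neg\beta)$. ${\bf Km}$ is the Hilbert calculus whose axioms are all instances (over $For$) of the axiom schemas of a standard Hilbert calculus for classical propositional logic in the signature $\{\neg,\to\}$, plus all instances of: (K') $\Diamond\alpha\to(\Box(\alpha\to\beta)\to(\Box\alpha\to\Box\beta))$; (K1') $\Diamond\neg\beta\to(\Box(\alpha\to\beta)\to(\Diamond\alpha\to\Diamond\beta))$; (K2') $\Diamond\alpha\to(\Diamond(\alpha\to\beta)\to(\Box\alpha\to\Diamond\beta))$;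 (M3') $(\Diamond\alpha\vee\Diamond\neg\alpha)\to(\Diamond\beta\to\Diamond(\alpha\to\beta))$; (M4') $\Diamond\neg\beta\to(\Diamond\neg\alpha\to\Diamond(\alpha\to\beta))$; (I1) $(\Box\alpha\wedge\Box\neg\alpha)\to(\Box(\alpha\to\beta)\wedge\Box\neg(\alpha\to\beta))$; (I2) $(\Box\beta\wedge\Box\neg\beta)\to(\Box(\alpha\to\beta)\wedge\Box\neg(\alpha\to\beta))$; (M1) $\neg\Diamond\alpha\to\Box(\alpha\to\beta)$; (M2) $\Box\beta\to\Box(\alpha\to\beta)$; (DN1) $\Box\alpha\to\Box\neg\neg\alpha$; (DN2) $\Box\neg\neg\alpha\to\Box\alpha$. Modus ponens is the only rule; $\Gamma\vdash_{\bf Km}\alpha$ means there is a derivation of $\alpha$ from $\Gamma$. *)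

theory Defs
  imports Main
begin

datatype form = Var nat | Neg form | Box form | Imp form form

definition Dia :: "form \<Rightarrow> form" where "Dia a = Neg (Box (Neg a))"
definition Or :: "form \<Rightarrow> form \<Rightarrow> form" where "Or a b = Imp (Neg a) b"
definition And :: "form \<Rightarrow> form \<Rightarrow> form" where "And a b = Neg (Imp a (Neg b))"

text \<open>Axioms of Km: a standard Hilbert calculus for CPL in {neg, imp}
  (Lukasiewicz's axioms A1-A3) plus the modal schemas.\<close>
inductive Km_axiom :: "form \<Rightarrow> bool" where
  A1: "Km_axiom (Imp a (Imp b a))"
| A2: "Km_axiom (Imp (Imp a (Imp b c)) (Imp (Imp a b) (Imp a c)))"
| A3: "Km_axiom (Imp (Imp (Neg a) (Neg b)) (Imp b a))"
| K': "Km_axiom (Imp (Dia a) (Imp (Box (Imp a b)) (Imp (Box a) (Box b))))"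
| K1': "Km_axiom (Imp (Dia (Neg b)) (Imp (Box (Imp a b)) (Imp (Dia a) (Dia b))))"
| K2': "Km_axiom (Imp (Dia a) (Imp (Dia (Imp a b)) (Imp (Box a) (Dia b))))"
| M3': "Km_axiom (Imp (Or (Dia a) (Dia (Neg a))) (Imp (Dia b) (Dia (Imp a b))))"
| M4': "Km_axiom (Imp (Dia (Neg b)) (Imp (Dia (Neg a)) (Dia (Imp a b))))"
| I1: "Km_axiom (Imp (And (Box a) (Box (Neg a))) (And (Box (Imp a b)) (Box (Neg (Imp a b)))))"
| I2: "Km_axiom (Imp (And (Box b) (Box (Neg b))) (And (Box (Imp a b)) (Box (Neg (Imp a b)))))"
| M1: "Km_axiom (Imp (Neg (Dia a)) (Box (Imp a b)))"
| M2: "Km_axiom (Imp (Box b) (Box (Imp a b)))"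
| DN1: "Km_axiom (Imp (Box a) (Box (Neg (Neg a))))"
| DN2: "Km_axiom (Imp (Box (Neg (Neg a))) (Box a))"

inductive Km_deriv :: "form set \<Rightarrow> form \<Rightarrow> bool" where
  prem: "a \<in> \<Gamma> \<Longrightarrow> Km_deriv \<Gamma> a"
| ax: "Km_axiom a \<Longrightarrow> Km_deriv \<Gamma> a"
| mp: "Km_deriv \<Gamma> a \<Longrightarrow> Km_deriv \<Gamma> (Imp a b) \<Longrightarrow> Km_deriv \<Gamma> b"

end

theory Submission
  imports Defs
begin

lemma ax': "Km_axiom a \<Longrightarrow> Km_deriv G a" by (rule Km_deriv.ax)

lemma mp2: "Km_deriv G (Imp a b) \<Longrightarrow> Km_deriv G a \<Longrightarrow> Km_deriv G b"
  by (rule Km_deriv.mp)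

lemma imp_refl: "Km_deriv G (Imp p p)"
proof -
  have 1: "Km_deriv G (Imp (Imp p (Imp (Imp p p) p)) (Imp (Imp p (Imp p p)) (Imp p p)))"
    by (rule ax', rule Km_axiom.A2)
  have 2: "Km_deriv G (Imp p (Imp (Imp p p) p))" by (rule ax', rule Km_axiom.A1)
  have 3: "Km_deriv G (Imp p (Imp p p))" by (rule ax', rule Km_axiom.A1)
  show ?thesis using mp2[OF mp2[OF 1 2] 3] .
qed

lemma deduction: "Km_deriv H q \<Longrightarrow> H = insert p G \<Longrightarrow> Km_deriv G (Imp p q)"
proof (induction rule: Km_deriv.induct)
  case (prem a \<Gamma>)
  show ?case
  proof (cases "a = p")
    case True then show ?thesis using imp_refl by simp
  next
    case False
    then have "Km_deriv G a" using prem by (auto intro: Km_deriv.prem)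
    then show ?thesis using mp2[OF ax'[OF Km_axiom.A1]] by blast
  qed
next
  case (ax a \<Gamma>)
  then show ?case using mp2[OF ax'[OF Km_axiom.A1] ax'] by blast
next
  case (mp \<Gamma> a b)
  have "Km_deriv G (Imp (Imp p (Imp a b)) (Imp (Imp p a) (Imp p b)))"
    by (rule ax', rule Km_axiom.A2)
  then show ?case using mp by (meson mp2)
qed

lemma ded: "Km_deriv (insert p G) q \<Longrightarrow> Km_deriv G (Imp p q)"
  using deduction by blast

lemma mono: "Km_deriv G q \<Longrightarrow> G \<subseteq> H \<Longrightarrow> Km_deriv H q"
  by (induction rule: Km_deriv.induct) (auto intro: Km_deriv.intros)

lemma exfalso: "Km_deriv G (Neg p) \<Longrightarrow> Km_deriv G p \<Longrightarrow> Km_deriv G q"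
proof -
  assume n: "Km_deriv G (Neg p)" and pp: "Km_deriv G p"
  have "Km_deriv G (Imp (Neg q) (Neg p))" using mp2[OF ax'[OF Km_axiom.A1] n] .
  then have "Km_deriv G (Imp p q)" using mp2[OF ax'[OF Km_axiom.A3]] by blast
  then show ?thesis using pp mp2 by blast
qed

lemma dne: "Km_deriv G (Neg (Neg p)) \<Longrightarrow> Km_deriv G p"
proof -
  assume n: "Km_deriv G (Neg (Neg p))"
  have "Km_deriv G (Imp (Neg (Neg (Neg (Neg p)))) (Neg (Neg p)))"
    using mp2[OF ax'[OF Km_axiom.A1] n] .
  then have "Km_deriv G (Imp (Neg p) (Neg (Neg (Neg p))))" using mp2[OF ax'[OF Km_axiom.A3]] by blast
  then have "Km_deriv G (Imp (Neg (Neg p)) p)" using mp2[OF ax'[OF Km_axiom.A3]] by blast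
  then show ?thesis using n mp2 by blast
qed

lemma reductio:
  assumes "Km_deriv (insert p G) q" "Km_deriv (insert p G) (Neg q)"
  shows "Km_deriv G (Neg p)"
proof -
  have 1: "Km_deriv G (Imp p q)" "Km_deriv G (Imp p (Neg q))" using assms ded by auto
  let ?H = "insert (Neg (Neg p)) G"
  have "Km_deriv ?H p" by (rule dne, rule Km_deriv.prem, simp)
  moreover have "Km_deriv ?H (Imp p q)" "Km_deriv ?H (Imp p (Neg q))"
    using 1 mono by (meson subset_insertI)+
  ultimately have "Km_deriv ?H q" "Km_deriv ?H (Neg q)" using mp2 by blast+
  then have "Km_deriv ?H (Neg (Imp p p))" using exfalso by blast
  then have "Km_deriv G (Imp (Neg (Neg p)) (Neg (Imp p p)))" by (rule ded)
  then have "Km_deriv G (Imp (Imp p p) (Neg p))" using mp2[OF ax'[OF Km_axiom.A3]] by blast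
  then show ?thesis using imp_refl mp2 by blast
qed

lemma mp3: "Km_deriv G (Imp a (Imp b (Imp c d))) \<Longrightarrow> Km_deriv G a \<Longrightarrow> Km_deriv G b \<Longrightarrow> Km_deriv G c \<Longrightarrow> Km_deriv G d"
  by (meson mp2)

lemma mp2b: "Km_deriv G (Imp a (Imp b c)) \<Longrightarrow> Km_deriv G a \<Longrightarrow> Km_deriv G b \<Longrightarrow> Km_deriv G c"
  by (meson mp2)

lemma P: "p \<in> G \<Longrightarrow> Km_deriv G p" by (rule Km_deriv.prem)

theorem mainTheorem19:
  fixes a b :: form
  shows "Km_deriv {Box a, Dia a, Dia (Neg b)} (Dia (Neg (Imp a b))) \<and>
    Km_deriv {Dia a, Box (Neg b), Dia (Neg b)} (Dia (Neg (Imp a b))) \<and>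
    Km_deriv {Box a, Dia a, Box (Neg b)} (Box (Neg (Imp a b))) \<and>
    Km_deriv {Dia a, Dia b} (Dia (Imp a b)) \<and>
    Km_deriv {Dia (Neg a), Dia b} (Dia (Imp a b)) \<and>
    Km_deriv {Dia (Neg a), Dia (Neg b)} (Dia (Imp a b))"
proof (intro conjI)
  let ?G = "{Box a, Dia a, Dia (Neg b)}"
  let ?H = "insert (Box (Neg (Neg (Imp a b)))) ?G"
  have h0: "Km_deriv ?H (Box (Neg (Neg (Imp a b))))" by (rule P, simp)
  have h1: "Km_deriv ?H (Box a)" by (rule P, simp)
  have h2: "Km_deriv ?H (Dia a)" by (rule P, simp)
  have h3: "Km_deriv ?H (Neg (Box (Neg (Neg b))))" by (rule P, simp add: Dia_def)
  have k: "Km_deriv ?H (Box (Imp a b))"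
    by (rule mp2[OF ax'[OF Km_axiom.DN2] h0])
  have "Km_deriv ?H (Imp (Dia a) (Imp (Box (Imp a b)) (Imp (Box a) (Box b))))" by (rule ax', rule Km_axiom.K')
  then have "Km_deriv ?H (Box b)" by (rule mp3[OF _ h2 k h1])
  then have "Km_deriv ?H (Box (Neg (Neg b)))" by (rule mp2[OF ax'[OF Km_axiom.DN1]])
  then show "Km_deriv ?G (Dia (Neg (Imp a b)))" unfolding Dia_def[of "Neg (Imp a b)"]
    using h3 by (rule reductio)
next
  let ?G = "{Dia a, Box (Neg b), Dia (Neg b)}"
  let ?H = "insert (Box (Neg (Neg (Imp a b)))) ?G"
  have h0: "Km_deriv ?H (Box (Neg (Neg (Imp a b))))" by (rule P, simp)
  have h1: "Km_deriv ?H (Box (Neg b))" by (rule P, simp)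
  have h2: "Km_deriv ?H (Dia a)" by (rule P, simp)
  have h3: "Km_deriv ?H (Dia (Neg b))" by (rule P, simp)
  have k: "Km_deriv ?H (Box (Imp a b))"
    by (rule mp2[OF ax'[OF Km_axiom.DN2] h0])
  have "Km_deriv ?H (Imp (Dia (Neg b)) (Imp (Box (Imp a b)) (Imp (Dia a) (Dia b))))" by (rule ax', rule Km_axiom.K1')
  then have "Km_deriv ?H (Dia b)" by (rule mp3[OF _ h3 k h2])
  then have "Km_deriv ?H (Neg (Box (Neg b)))" by (simp add: Dia_def)
  then show "Km_deriv ?G (Dia (Neg (Imp a b)))" unfolding Dia_def[of "Neg (Imp a b)"]
    by (rule reductio[OF h1])
next
  let ?G = "{Box a, Dia a, Box (Neg b)}"
  let ?H = "insert (Dia (Imp a b)) ?G"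
  have h0: "Km_deriv ?H (Dia (Imp a b))" by (rule P, simp)
  have h1: "Km_deriv ?H (Box a)" by (rule P, simp)
  have h2: "Km_deriv ?H (Dia a)" by (rule P, simp)
  have h3: "Km_deriv ?H (Box (Neg b))" by (rule P, simp)
  have "Km_deriv ?H (Imp (Dia a) (Imp (Dia (Imp a b)) (Imp (Box a) (Dia b))))" by (rule ax', rule Km_axiom.K2')
  then have "Km_deriv ?H (Dia b)" by (rule mp3[OF _ h2 h0 h1])
  then have "Km_deriv ?H (Neg (Box (Neg b)))" by (simp add: Dia_def)
  then have "Km_deriv ?G (Neg (Dia (Imp a b)))" by (rule reductio[OF h3])
  then show "Km_deriv ?G (Box (Neg (Imp a b)))" unfolding Dia_def by (rule dne)
next
  let ?G = "{Dia a, Dia b}"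
  have g1: "Km_deriv ?G (Dia a)" by (rule P, simp)
  have g2: "Km_deriv ?G (Dia b)" by (rule P, simp)
  have "Km_deriv (insert (Neg (Dia a)) ?G) (Dia (Neg a))"
    by (rule exfalso[of _ "Dia a"]; rule P; simp)
  then have "Km_deriv ?G (Imp (Neg (Dia a)) (Dia (Neg a)))" by (rule ded)
  then have h: "Km_deriv ?G (Or (Dia a) (Dia (Neg a)))" by (simp add: Or_def)
  have "Km_deriv ?G (Imp (Or (Dia a) (Dia (Neg a))) (Imp (Dia b) (Dia (Imp a b))))" by (rule ax', rule Km_axiom.M3')
  then show "Km_deriv ?G (Dia (Imp a b))" by (rule mp2b[OF _ h g2])
next
  let ?G = "{Dia (Neg a), Dia b}"
  have g1: "Km_deriv ?G (Dia (Neg a))" by (rule P, simp)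
  have g2: "Km_deriv ?G (Dia b)" by (rule P, simp)
  have "Km_deriv ?G (Imp (Neg (Dia a)) (Dia (Neg a)))"
    by (rule mp2[OF ax'[OF Km_axiom.A1] g1])
  then have h: "Km_deriv ?G (Or (Dia a) (Dia (Neg a)))" by (simp add: Or_def)
  have "Km_deriv ?G (Imp (Or (Dia a) (Dia (Neg a))) (Imp (Dia b) (Dia (Imp a b))))" by (rule ax', rule Km_axiom.M3')
  then show "Km_deriv ?G (Dia (Imp a b))" by (rule mp2b[OF _ h g2])
next
  let ?G = "{Dia (Neg a), Dia (Neg b)}"
  have g1: "Km_deriv ?G (Dia (Neg a))" by (rule P, simp)
  have g2: "Km_deriv ?G (Dia (Neg b))" by (rule P, simp)
  have "Km_deriv ?G (Imp (Dia (Neg b)) (Imp (Dia (Neg a)) (Dia (Imp a b))))" by (rule ax', rule Km_axiom.M4')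
  then show "Km_deriv ?G (Dia (Imp a b))" by (rule mp2b[OF _ g2 g1])
qed

end
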